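(* Let \((Q, \preccurlyeq_Q)\) and \((L, \preccurlyeq_L)\) be posets with smallest elements \(q_0 \in Q\) and \(l_0 \in L\). Then the following conditions are equivalent for every mapping \(f \colon Q \to L\). (i) For every nonempty set \(X\), \(f \circ d\) is an \(L\)-ultrametric whenever \(d\colon X^2\to Q\) is a \(Q\)-ultrametric. (ii) \(f\) is isotone and, for every \(q \in Q\), \(f(q) = l_0\) holds if and only if \(q = q_0\).
   Context: For a poset \((P,\preccurlyeq_P)\) with smallest element \(p_0\) and a nonempty set \(X\), \(d\colon X^2\to P\) is a \(P\)-pseudoultrametric if \(d\) is symmetric, \(d(x,x)=p_0\) for all \(x\), and for every triple \(\langle x_1,x_2,x_3\rangle\) in \(X\) there is a permutation \((i_1,i_2,i_3)\) of \((1,2,3)\) with \(d(x_{i_1},x_{i_3})\preccurlyeq_P d(x_{i_1},x_{i_2})\) and \(d(x_{i_1},x_{i_2})=d(x_{i_2},x_{i_3})\); it is a \(P\)-ultrametric if moreover \(d(x,y)=p_0\) iff \(x=y\). A map \(f\colon Q\to L\) is isotone if \(q_1\preccurlyeq_Q q_2\) implies \(f(q_1)\preccurlyeq_L f(q_2)\). *)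

theory Defs
  imports Main "HOL-Library.Infinite_Typeclass"
begin

definition P_pseudoultrametric :: "'p::order \<Rightarrow> 'x set \<Rightarrow> ('x \<Rightarrow> 'x \<Rightarrow> 'p) \<Rightarrow> bool" where
  "P_pseudoultrametric p0 X d \<longleftrightarrow>
     (\<forall>x\<in>X. \<forall>y\<in>X. d x y = d y x) \<and>
     (\<forall>x\<in>X. d x x = p0) \<and>
     (\<forall>x1\<in>X. \<forall>x2\<in>X. \<forall>x3\<in>X.
        \<exists>(a, b, c) \<in> {(x1,x2,x3), (x1,x3,x2), (x2,x1,x3), (x2,x3,x1), (x3,x1,x2), (x3,x2,x1)}.
          d a c \<le> d a b \<and> d a b = d b c)"

definition P_ultrametric :: "'p::order \<Rightarrow> 'x set \<Rightarrow> ('x \<Rightarrow> 'x \<Rightarrow> 'p) \<Rightarrow> bool" where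
  "P_ultrametric p0 X d \<longleftrightarrow>
     P_pseudoultrametric p0 X d \<and> (\<forall>x\<in>X. \<forall>y\<in>X. d x y = p0 \<longleftrightarrow> x = y)"

end

theory Submission
  imports Defs
begin

lemma three_points:
  "\<exists>a b c :: 'x::infinite. a \<noteq> b \<and> a \<noteq> c \<and> b \<noteq> c"
proof -
  obtain a :: 'x where True by blast
  obtain b :: 'x where "b \<notin> {a}" using ex_new_if_finite[OF infinite_UNIV, of "{a}"] by blast
  obtain c :: 'x where "c \<notin> {a,b}" using ex_new_if_finite[OF infinite_UNIV, of "{a,b}"] by blast
  show ?thesis using \<open>b \<notin> {a}\<close> \<open>c \<notin> {a,b}\<close> by blast
qed

lemma um_three:
  fixes q0 q1 q2 :: "'q::order" and a b c :: 'x
  assumes "a \<noteq> b" "a \<noteq> c" "b \<noteq> c" "q0 \<noteq> q1" "q0 \<noteq> q2" "q1 \<le> q2" "q0 \<le> q1" "q0 \<le> q2"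
  shows "P_ultrametric q0 {a,b,c}
     (\<lambda>x y. if x = y then q0 else if (x = a \<and> y = b) \<or> (x = b \<and> y = a) then q1 else q2)"
  using assms unfolding P_ultrametric_def P_pseudoultrametric_def
  by auto

lemma um_two:
  fixes q0 q :: "'q::order" and a b :: 'x
  assumes "a \<noteq> b" "q0 \<noteq> q" "q0 \<le> q"
  shows "P_ultrametric q0 {a,b} (\<lambda>x y. if x = y then q0 else q)"
  using assms unfolding P_ultrametric_def P_pseudoultrametric_def
  by auto

lemma um_one:
  fixes q0 :: "'q::order" and a :: 'x
  shows "P_ultrametric q0 {a} (\<lambda>x y. q0)"
  unfolding P_ultrametric_def P_pseudoultrametric_def
  by auto

theorem corollary3p25:
  fixes q0 :: "'q::order" and l0 :: "'l::order" and f :: "'q \<Rightarrow> 'l"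
  assumes "\<forall>q. q0 \<le> q" and "\<forall>l. l0 \<le> l"
  shows "(\<forall>X :: 'x::infinite set. X \<noteq> {} \<longrightarrow>
            (\<forall>d. P_ultrametric q0 X d \<longrightarrow> P_ultrametric l0 X (\<lambda>x y. f (d x y))))
         \<longleftrightarrow> (mono f \<and> (\<forall>q. f q = l0 \<longleftrightarrow> q = q0))"
proof
  assume H: "\<forall>X :: 'x::infinite set. X \<noteq> {} \<longrightarrow>
            (\<forall>d. P_ultrametric q0 X d \<longrightarrow> P_ultrametric l0 X (\<lambda>x y. f (d x y)))"
  obtain a b c :: 'x where abc: "a \<noteq> b" "a \<noteq> c" "b \<noteq> c" using three_points by blast
  have f0: "f q0 = l0"
    using H[rule_format, OF _ um_one[of q0 a]] unfolding P_ultrametric_def P_pseudoultrametric_def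
    by auto
  have fq: "f q \<noteq> l0" if "q \<noteq> q0" for q
  proof -
    have "P_ultrametric l0 {a,b} (\<lambda>x y. f (if x = y then q0 else q))"
      using H[rule_format, OF _ um_two[of a b q0 q]] that abc assms(1) by auto
    then show ?thesis using abc unfolding P_ultrametric_def by auto
  qed
  have "mono f"
  proof (rule monoI)
    fix q1 q2 :: 'q assume le: "q1 \<le> q2"
    show "f q1 \<le> f q2"
    proof (cases "q1 = q0")
      case True then show ?thesis using f0 assms(2) by simp
    next
      case False
      have n2: "q0 \<noteq> q2" using False le assms(1) by (metis order_antisym)
      have "P_ultrametric l0 {a,b,c} (\<lambda>x y. f (if x = y then q0 else if (x = a \<and> y = b) \<or> (x = b \<and> y = a) then q1 else q2))"
        using H[rule_format, OF _ um_three[of a b c q0 q1 q2]] abc False n2 le assms(1) by auto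
      then have "\<exists>(u, v, w) \<in> {(a,b,c), (a,c,b), (b,a,c), (b,c,a), (c,a,b), (c,b,a)}.
          f (if u = w then q0 else if (u = a \<and> w = b) \<or> (u = b \<and> w = a) then q1 else q2)
          \<le> f (if u = v then q0 else if (u = a \<and> v = b) \<or> (u = b \<and> v = a) then q1 else q2) \<and>
          f (if u = v then q0 else if (u = a \<and> v = b) \<or> (u = b \<and> v = a) then q1 else q2)
          = f (if v = w then q0 else if (v = a \<and> w = b) \<or> (v = b \<and> w = a) then q1 else q2)"
        unfolding P_ultrametric_def P_pseudoultrametric_def by blast
      then show ?thesis using abc by auto
    qed
  qed
  then show "mono f \<and> (\<forall>q. f q = l0 \<longleftrightarrow> q = q0)" using f0 fq by blast
next
  assume H: "mono f \<and> (\<forall>q. f q = l0 \<longleftrightarrow> q = q0)"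
  show "\<forall>X :: 'x::infinite set. X \<noteq> {} \<longrightarrow>
            (\<forall>d. P_ultrametric q0 X d \<longrightarrow> P_ultrametric l0 X (\<lambda>x y. f (d x y)))"
  proof (intro allI impI)
    fix X :: "'x set" and d assume "X \<noteq> {}" and D: "P_ultrametric q0 X d"
    have mf: "\<And>s t. s \<le> t \<Longrightarrow> f s \<le> f t" using H by (simp add: monoD)
    have eq: "\<And>q. f q = l0 \<longleftrightarrow> q = q0" using H by blast
    show "P_ultrametric l0 X (\<lambda>x y. f (d x y))"
      unfolding P_ultrametric_def P_pseudoultrametric_def
    proof (intro conjI ballI)
      fix x y assume "x \<in> X" "y \<in> X"
      then show "f (d x y) = f (d y x)" "f (d x y) = l0 \<longleftrightarrow> x = y"
        using D eq unfolding P_ultrametric_def P_pseudoultrametric_def by auto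
    next
      fix x assume "x \<in> X"
      then show "f (d x x) = l0" using D eq unfolding P_ultrametric_def P_pseudoultrametric_def by auto
    next
      fix x1 x2 x3 assume xs: "x1 \<in> X" "x2 \<in> X" "x3 \<in> X"
      then obtain u v w where "(u, v, w) \<in> {(x1,x2,x3), (x1,x3,x2), (x2,x1,x3), (x2,x3,x1), (x3,x1,x2), (x3,x2,x1)}"
        "d u w \<le> d u v" "d u v = d v w"
        using D unfolding P_ultrametric_def P_pseudoultrametric_def by blast
      then show "\<exists>(u, v, w) \<in> {(x1,x2,x3), (x1,x3,x2), (x2,x1,x3), (x2,x3,x1), (x3,x1,x2), (x3,x2,x1)}.
          f (d u w) \<le> f (d u v) \<and> f (d u v) = f (d v w)"
        using mf by fastforce
    qed
  qed
qed

end
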